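(* A finitely branching directed graph is locally finite if and only if it contains no quasicycles.
   Context: For a directed graph $G$ and vertices $s,t$, $G(s,t)$ denotes the set of directed paths from $s$ to $t$; $G$ is locally finite if $G(s,t)$ is finite for all vertices $s,t$. $G$ is finitely branching if for every vertex $s$ the set $\{t : G \text{ contains an edge } s\to t\}$ is finite. A quasicycle in $G$ is a pair $(T,t)$ where $T$ is an infinite chain $t_0\to t_1\to t_2\to\cdots$ in $G$, $t$ is a vertex of $G$, and $G$ contains a path $t_i\to t$ for every $i\in\mathbb{N}$. *)

theory Defs
  imports Main
begin

definition is_path :: "('a \<Rightarrow> 'a \<Rightarrow> bool) \<Rightarrow> 'a list \<Rightarrow> bool" where
  "is_path E p \<longleftrightarrow> p \<noteq> [] \<and> (\<forall>i. Suc i < length p \<longrightarrow> E (p ! i) (p ! Suc i))"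

definition paths :: "('a \<Rightarrow> 'a \<Rightarrow> bool) \<Rightarrow> 'a \<Rightarrow> 'a \<Rightarrow> 'a list set" where
  "paths E s t = {p. is_path E p \<and> hd p = s \<and> last p = t}"

definition locally_finite :: "('a \<Rightarrow> 'a \<Rightarrow> bool) \<Rightarrow> bool" where
  "locally_finite E \<longleftrightarrow> (\<forall>s t. finite (paths E s t))"

definition finitely_branching :: "('a \<Rightarrow> 'a \<Rightarrow> bool) \<Rightarrow> bool" where
  "finitely_branching E \<longleftrightarrow> (\<forall>s. finite {t. E s t})"

definition quasicycle :: "('a \<Rightarrow> 'a \<Rightarrow> bool) \<Rightarrow> (nat \<Rightarrow> 'a) \<Rightarrow> 'a \<Rightarrow> bool" where
  "quasicycle E T t \<longleftrightarrow> (\<forall>i. E (T i) (T (Suc i))) \<and> (\<forall>i. paths E (T i) t \<noteq> {})"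

end

theory Submission
  imports Defs
begin

lemma cons_path:
  assumes "E u v" "p \<in> paths E v t"
  shows "u # p \<in> paths E u t"
proof -
  have pp: "is_path E p" "hd p = v" "last p = t" "p \<noteq> []"
    using assms(2) by (auto simp: paths_def is_path_def)
  have "is_path E (u # p)"
    unfolding is_path_def
  proof (intro conjI allI impI)
    fix i assume "Suc i < length (u # p)"
    show "E ((u # p) ! i) ((u # p) ! Suc i)"
    proof (cases i)
      case 0 then show ?thesis using pp assms(1) by (simp add: hd_conv_nth)
    next
      case (Suc k) then show ?thesis using pp \<open>Suc i < length (u # p)\<close>
        by (simp add: is_path_def)
    qed
  qed simp
  then show ?thesis using pp by (simp add: paths_def)
qed

lemma paths_split:
  "paths E u t \<subseteq> {[u]} \<union> (\<Union>v\<in>{v. E u v}. (#) u ` paths E v t)"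
proof
  fix p assume p: "p \<in> paths E u t"
  then obtain q where pq: "p = u # q"
    by (cases p) (auto simp: paths_def is_path_def)
  show "p \<in> {[u]} \<union> (\<Union>v\<in>{v. E u v}. (#) u ` paths E v t)"
  proof (cases q)
    case Nil then show ?thesis using pq by simp
  next
    case (Cons v r)
    have ip: "is_path E p" "last p = t" using p by (auto simp: paths_def)
    have "Suc 0 < length p" using pq Cons by simp
    then have "E (p ! 0) (p ! Suc 0)" using ip(1) unfolding is_path_def by blast
    then have "E u v" using pq Cons by simp
    moreover have "is_path E q"
      unfolding is_path_def
    proof (intro conjI allI impI)
      show "q \<noteq> []" using Cons by simp
      fix i assume "Suc i < length q"
      then have "Suc (Suc i) < length p" using pq by simp
      then have "E (p ! Suc i) (p ! Suc (Suc i))" using ip(1) unfolding is_path_def by blast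
      then show "E (q ! i) (q ! Suc i)" using pq by simp
    qed
    moreover have "last q = t" using ip(2) pq Cons by simp
    ultimately have "q \<in> paths E v t" using Cons by (simp add: paths_def)
    then have "p \<in> (#) u ` paths E v t" using pq by simp
    then show ?thesis using \<open>E u v\<close> by (intro UnI2 UN_I) auto
  qed
qed

theorem lemma3p14:
  fixes E :: "'a \<Rightarrow> 'a \<Rightarrow> bool"
  assumes "finitely_branching E"
  shows "locally_finite E \<longleftrightarrow> \<not> (\<exists>T t. quasicycle E T t)"
proof
  assume lf: "locally_finite E"
  show "\<not> (\<exists>T t. quasicycle E T t)"
  proof
    assume "\<exists>T t. quasicycle E T t"
    then obtain T t where q: "\<forall>i. E (T i) (T (Suc i))" "\<forall>i. paths E (T i) t \<noteq> {}"
      by (auto simp: quasicycle_def)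
    have long: "\<exists>p \<in> paths E (T j) t. length p \<ge> Suc i" for i j
    proof (induction i arbitrary: j)
      case 0
      obtain p where p: "p \<in> paths E (T j) t" using q(2) by blast
      then have "p \<noteq> []" by (simp add: paths_def is_path_def)
      then have "length p \<ge> Suc 0" by (cases p) auto
      then show ?case using p by blast
    next
      case (Suc i)
      then obtain p where "p \<in> paths E (T (Suc j)) t" "length p \<ge> Suc i" by blast
      then have "T j # p \<in> paths E (T j) t" "length (T j # p) \<ge> Suc (Suc i)"
        using cons_path[of E "T j" "T (Suc j)" p t] q(1) by auto
      then show ?case by blast
    qed
    have fin: "finite (paths E (T 0) t)" using lf by (simp add: locally_finite_def)
    define M where "M = Max (length ` paths E (T 0) t)"
    obtain p where "p \<in> paths E (T 0) t" "length p \<ge> Suc M" using long by blast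
    moreover have "length p \<le> M" unfolding M_def
      by (rule Max_ge) (use fin calculation(1) in auto)
    ultimately show False by simp
  qed
next
  assume nq: "\<not> (\<exists>T t. quasicycle E T t)"
  show "locally_finite E"
    unfolding locally_finite_def
  proof (rule ccontr)
    assume "\<not> (\<forall>s t. finite (paths E s t))"
    then obtain s t where inf0: "infinite (paths E s t)" by blast
    have step: "\<exists>v. E u v \<and> infinite (paths E v t)" if "infinite (paths E u t)" for u
    proof (rule ccontr)
      assume "\<not> ?thesis"
      then have fv: "\<And>v. v \<in> {v. E u v} \<Longrightarrow> finite ((#) u ` paths E v t)" by blast
      have "finite {v. E u v}" using assms by (simp add: finitely_branching_def)
      then have "finite (\<Union>v\<in>{v. E u v}. (#) u ` paths E v t)" using fv by (rule finite_UN_I)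
      then have "finite ({[u]} \<union> (\<Union>v\<in>{v. E u v}. (#) u ` paths E v t))" by simp
      then have "finite (paths E u t)" by (rule finite_subset[OF paths_split])
      then show False using that by simp
    qed
    define nx where "nx u = (SOME v. E u v \<and> infinite (paths E v t))" for u
    define T where "T = rec_nat s (\<lambda>_ u. nx u)"
    have nxp: "E u (nx u) \<and> infinite (paths E (nx u) t)" if "infinite (paths E u t)" for u
      unfolding nx_def by (rule someI_ex[OF step[OF that]])
    have TS: "T (Suc i) = nx (T i)" for i by (simp add: T_def)
    have inf: "infinite (paths E (T i) t)" for i
    proof (induction i)
      case 0 then show ?case using inf0 by (simp add: T_def)
    next
      case (Suc i) then show ?case using nxp TS by metis
    qed
    have "E (T i) (T (Suc i))" for i
      using nxp[OF inf[of i]] TS by metis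
    moreover have "paths E (T i) t \<noteq> {}" for i using inf[of i] by auto
    ultimately have "quasicycle E T t" by (simp add: quasicycle_def)
    then show False using nq by blast
  qed
qed

end
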